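(* Let $(A,[\cdot,\cdot])$ be a Malcev algebra and let $r\in A\otimes A$ be skew-symmetric. Assume there exists a nondegenerate symmetric invariant bilinear form $B$ on $A$, and define $\varphi:A\to A^*$ by $\langle\varphi(x),y\rangle=B(x,y)$. Then $r$ is a solution of the Malcev Yang-Baxter equation in $A$ if and only if $\mathcal{R}=r\circ\varphi:A\to A$ is a Rota-Baxter operator of weight $0$ on $A$.
   Context: Field $\mathbb{K}$ of characteristic zero, finite-dimensional spaces. A Malcev algebra is a vector space with an anti-symmetric bracket satisfying $J(x,y,[x,z])=[J(x,y,z),x]$, $J(x,y,z)=[[x,y],z]+[[z,x],y]+[[y,z],x]$. $r\in A\otimes A$ is viewed as a map $r:A^*\to A$ by $\langle a^*,r(b^* )\rangle=\langle a^*\otimes b^*,r\rangle$; skew-symmetric means $r=-\sigma(r)$ with $\sigma(a\otimes b)=b\otimes a$. For $r=\sum_i x_i\otimes y_i$, $r$ solves the Malcev Yang-Baxter equation if $\sum_{i,j}[x_i,x_j]\otimes y_i\otimes y_j+\sum_{i,j}x_i\otimes[y_i,x_j]\otimes y_j+\sum_{i,j}x_i\otimes x_j\otimes[y_i,y_j]=0$. A symmetric bilinear form $B$ is invariant if $B([x,y],z)=B(x,[y,z])$. A Rota-Baxter operator of weight $0$ is a linear map $\mathcal{R}:A\to A$ with $[\mathcal{R}(x),\mathcal{R}(y)]=\mathcal{R}([\mathcal{R}(x),y]+[x,\mathcal{R}(y)])$ for all $x,y$. *)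

theory Defs
  imports Complex_Main
begin

text \<open>An element r of A (x) A is given as
  a finite sum r = sum_i x_i (x) y_i, i.e. as a list of pairs (x_i, y_i); equalities of
  tensors are tested against the dual space (canonical pairing of A^{(x)k} with (A*)^{(x)k}).\<close>

definition fin_dim_vs :: "('k::field \<Rightarrow> 'v::ab_group_add \<Rightarrow> 'v) \<Rightarrow> bool" where
  "fin_dim_vs scale \<longleftrightarrow> vector_space scale \<and>
     (\<exists>S. finite S \<and> module.span scale S = UNIV)"

definition dual_vec :: "('k::field \<Rightarrow> 'v::ab_group_add \<Rightarrow> 'v) \<Rightarrow> ('v \<Rightarrow> 'k) \<Rightarrow> bool" where
  "dual_vec scale f \<longleftrightarrow> Vector_Spaces.linear scale (*) f"

definition bilinear_map :: "('k::field \<Rightarrow> 'v::ab_group_add \<Rightarrow> 'v) \<Rightarrow>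
    ('k \<Rightarrow> 'w::ab_group_add \<Rightarrow> 'w) \<Rightarrow> ('v \<Rightarrow> 'v \<Rightarrow> 'w) \<Rightarrow> bool" where
  "bilinear_map scale scale' b \<longleftrightarrow>
     (\<forall>x. Vector_Spaces.linear scale scale' (b x)) \<and>
     (\<forall>y. Vector_Spaces.linear scale scale' (\<lambda>x. b x y))"

definition jacobiator :: "('v::ab_group_add \<Rightarrow> 'v \<Rightarrow> 'v) \<Rightarrow> 'v \<Rightarrow> 'v \<Rightarrow> 'v \<Rightarrow> 'v" where
  "jacobiator br x y z = br (br x y) z + br (br z x) y + br (br y z) x"

definition malcev_algebra :: "('k::field \<Rightarrow> 'v::ab_group_add \<Rightarrow> 'v) \<Rightarrow> ('v \<Rightarrow> 'v \<Rightarrow> 'v) \<Rightarrow> bool" where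
  "malcev_algebra scale br \<longleftrightarrow>
     bilinear_map scale scale br \<and>
     (\<forall>x y. br x y = - br y x) \<and>
     (\<forall>x y z. jacobiator br x y (br x z) = br (jacobiator br x y z) x)"

text \<open>r = sum_i x_i (x) y_i viewed as a map A* -> A: <a*, r(b*)> = <a* (x) b*, r>,
  hence r(b*) = sum_i b*(y_i) x_i.\<close>
definition tensor_map :: "('k::field \<Rightarrow> 'v::ab_group_add \<Rightarrow> 'v) \<Rightarrow> ('v \<times> 'v) list \<Rightarrow> ('v \<Rightarrow> 'k) \<Rightarrow> 'v" where
  "tensor_map scale r g = (\<Sum>p\<leftarrow>r. scale (g (snd p)) (fst p))"

definition skew_tensor :: "('k::field \<Rightarrow> 'v::ab_group_add \<Rightarrow> 'v) \<Rightarrow> ('v \<times> 'v) list \<Rightarrow> bool" where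
  "skew_tensor scale r \<longleftrightarrow>
     (\<forall>f g. dual_vec scale f \<longrightarrow> dual_vec scale g \<longrightarrow>
        (\<Sum>p\<leftarrow>r. f (fst p) * g (snd p)) = - (\<Sum>p\<leftarrow>r. f (snd p) * g (fst p)))"

definition malcev_YBE :: "('k::field \<Rightarrow> 'v::ab_group_add \<Rightarrow> 'v) \<Rightarrow> ('v \<Rightarrow> 'v \<Rightarrow> 'v) \<Rightarrow> ('v \<times> 'v) list \<Rightarrow> bool" where
  "malcev_YBE scale br r \<longleftrightarrow>
     (\<forall>f g h. dual_vec scale f \<longrightarrow> dual_vec scale g \<longrightarrow> dual_vec scale h \<longrightarrow>
        (\<Sum>p\<leftarrow>r. \<Sum>q\<leftarrow>r.
            f (br (fst p) (fst q)) * g (snd p) * h (snd q)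
          + f (fst p) * g (br (snd p) (fst q)) * h (snd q)
          + f (fst p) * g (fst q) * h (br (snd p) (snd q))) = 0)"

definition invariant_form :: "('v \<Rightarrow> 'v \<Rightarrow> 'v) \<Rightarrow> ('v \<Rightarrow> 'v \<Rightarrow> 'k) \<Rightarrow> bool" where
  "invariant_form br B \<longleftrightarrow> (\<forall>x y z. B (br x y) z = B x (br y z))"

definition nondegenerate_form :: "('v::zero \<Rightarrow> 'v \<Rightarrow> 'k::zero) \<Rightarrow> bool" where
  "nondegenerate_form B \<longleftrightarrow> (\<forall>x. (\<forall>y. B x y = 0) \<longrightarrow> x = 0)"

definition symmetric_form :: "('v \<Rightarrow> 'v \<Rightarrow> 'k) \<Rightarrow> bool" where
  "symmetric_form B \<longleftrightarrow> (\<forall>x y. B x y = B y x)"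

definition rota_baxter_0 :: "('v::ab_group_add \<Rightarrow> 'v \<Rightarrow> 'v) \<Rightarrow> ('v \<Rightarrow> 'v) \<Rightarrow> bool" where
  "rota_baxter_0 br R \<longleftrightarrow>
     (\<forall>x y. br (R x) (R y) = R (br (R x) y + br x (R y)))"

end

theory Submission imports Defs begin

lemma lin_add: "Vector_Spaces.linear s1 s2 f \<Longrightarrow> f (a + b) = f a + f b"
  using linear_iff_module_hom module_hom.add by metis
lemma lin_scale: "Vector_Spaces.linear s1 s2 f \<Longrightarrow> f (s1 c x) = s2 c (f x)"
  using linear_iff_module_hom module_hom.scale by metis
lemma lin_neg: "Vector_Spaces.linear s1 s2 f \<Longrightarrow> f (- a) = - f a"
  using linear_iff_module_hom module_hom.neg by metis
lemma lin_diff: "Vector_Spaces.linear s1 s2 f \<Longrightarrow> f (a - b) = f a - f b"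
  using linear_iff_module_hom module_hom.diff by metis
lemma lin_zero: "Vector_Spaces.linear s1 s2 f \<Longrightarrow> f 0 = 0"
  using linear_iff_module_hom module_hom.zero by metis

lemma dual_tm:
  assumes "dual_vec s L"
  shows "L (tensor_map s r g) = (\<Sum>p\<leftarrow>r. g (snd p) * L (fst p))"
  using assms unfolding tensor_map_def dual_vec_def
  by (induction r) (auto simp: lin_add lin_scale lin_zero)

lemma dual_comp1:
  assumes "bilinear_map s s br" "dual_vec s f"
  shows "dual_vec s (\<lambda>u. f (br u z))"
proof -
  have "Vector_Spaces.linear s s (\<lambda>u. br u z)" using assms(1) unfolding bilinear_map_def by blast
  from Vector_Spaces.linear_compose[OF this assms(2)[unfolded dual_vec_def]]
  show ?thesis unfolding dual_vec_def o_def .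
qed

lemma dual_comp2:
  assumes "bilinear_map s s br" "dual_vec s f"
  shows "dual_vec s (\<lambda>u. f (br z u))"
proof -
  have "Vector_Spaces.linear s s (br z)" using assms(1) unfolding bilinear_map_def by blast
  from Vector_Spaces.linear_compose[OF this assms(2)[unfolded dual_vec_def]]
  show ?thesis unfolding dual_vec_def o_def .
qed

lemma skew_swap:
  assumes "skew_tensor s r" "dual_vec s F" "dual_vec s G"
  shows "G (tensor_map s r F) = - F (tensor_map s r G)"
proof -
  have "G (tensor_map s r F) = (\<Sum>p\<leftarrow>r. G (fst p) * F (snd p))"
    using dual_tm[OF assms(3)] by (simp add: mult.commute)
  also have "\<dots> = - (\<Sum>p\<leftarrow>r. G (snd p) * F (fst p))"
    using assms unfolding skew_tensor_def by blast
  also have "\<dots> = - F (tensor_map s r G)"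
    using dual_tm[OF assms(2)] by simp
  finally show ?thesis .
qed

lemma sum_list_neg': "(\<Sum>x\<leftarrow>xs. - F x) = - (\<Sum>x\<leftarrow>xs. (F x :: 'a::ab_group_add))"
  by (induction xs) simp_all

lemma ybe_expr:
  assumes bl: "bilinear_map s s br" and sk: "skew_tensor s r"
    and f: "dual_vec s f" and g: "dual_vec s g" and h: "dual_vec s h"
  shows "(\<Sum>p\<leftarrow>r. \<Sum>q\<leftarrow>r.
            f (br (fst p) (fst q)) * g (snd p) * h (snd q)
          + f (fst p) * g (br (snd p) (fst q)) * h (snd q)
          + f (fst p) * g (fst q) * h (br (snd p) (snd q)))
    = f (br (tensor_map s r g) (tensor_map s r h)) - g (br (tensor_map s r f) (tensor_map s r h))
      + h (br (tensor_map s r f) (tensor_map s r g))"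
proof -
  let ?t = "tensor_map s r"
  have t1: "(\<Sum>p\<leftarrow>r. \<Sum>q\<leftarrow>r. f (br (fst p) (fst q)) * g (snd p) * h (snd q))
      = f (br (?t g) (?t h))"
  proof -
    have "f (br (?t g) (?t h)) = (\<Sum>p\<leftarrow>r. g (snd p) * f (br (fst p) (?t h)))"
      using dual_tm[OF dual_comp1[OF bl f]] .
    also have "\<dots> = (\<Sum>p\<leftarrow>r. g (snd p) * (\<Sum>q\<leftarrow>r. h (snd q) * f (br (fst p) (fst q))))"
      using dual_tm[OF dual_comp2[OF bl f]] by simp
    also have "\<dots> = (\<Sum>p\<leftarrow>r. \<Sum>q\<leftarrow>r. f (br (fst p) (fst q)) * g (snd p) * h (snd q))"
      by (simp add: sum_list_const_mult[symmetric] mult_ac)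
    finally show ?thesis by simp
  qed
  have t2: "(\<Sum>p\<leftarrow>r. \<Sum>q\<leftarrow>r. f (fst p) * g (br (snd p) (fst q)) * h (snd q))
      = - g (br (?t f) (?t h))"
  proof -
    let ?G = "\<lambda>u. g (br u (?t h))"
    have G: "dual_vec s ?G" using dual_comp1[OF bl g] .
    have "(\<Sum>p\<leftarrow>r. \<Sum>q\<leftarrow>r. f (fst p) * g (br (snd p) (fst q)) * h (snd q))
        = (\<Sum>p\<leftarrow>r. f (fst p) * (\<Sum>q\<leftarrow>r. h (snd q) * g (br (snd p) (fst q))))"
      by (simp add: sum_list_const_mult[symmetric] mult_ac)
    also have "\<dots> = (\<Sum>p\<leftarrow>r. f (fst p) * ?G (snd p))"
      using dual_tm[OF dual_comp2[OF bl g]] by simp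
    also have "\<dots> = f (?t ?G)"
      using dual_tm[OF f] by (simp add: mult_ac)
    also have "\<dots> = - ?G (?t f)" using skew_swap[OF sk G f] .
    finally show ?thesis .
  qed
  have t3: "(\<Sum>p\<leftarrow>r. \<Sum>q\<leftarrow>r. f (fst p) * g (fst q) * h (br (snd p) (snd q)))
      = h (br (?t f) (?t g))"
  proof -
    let ?K = "\<lambda>u. h (br u (?t g))"
    have K: "dual_vec s ?K" using dual_comp1[OF bl h] .
    have inner: "(\<Sum>q\<leftarrow>r. g (fst q) * h (br y (snd q))) = - h (br y (?t g))" for y
    proof -
      have H: "dual_vec s (\<lambda>u. h (br y u))" using dual_comp2[OF bl h] .
      have "(\<Sum>q\<leftarrow>r. g (fst q) * h (br y (snd q))) = g (?t (\<lambda>u. h (br y u)))"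
        using dual_tm[OF g] by (simp add: mult_ac)
      also have "\<dots> = - h (br y (?t g))" using skew_swap[OF sk H g] .
      finally show ?thesis .
    qed
    have "(\<Sum>p\<leftarrow>r. \<Sum>q\<leftarrow>r. f (fst p) * g (fst q) * h (br (snd p) (snd q)))
        = (\<Sum>p\<leftarrow>r. f (fst p) * (\<Sum>q\<leftarrow>r. g (fst q) * h (br (snd p) (snd q))))"
      by (simp add: sum_list_const_mult[symmetric] mult_ac)
    also have "\<dots> = - (\<Sum>p\<leftarrow>r. f (fst p) * ?K (snd p))"
      by (simp add: inner sum_list_const_mult[symmetric] sum_list_neg')
    also have "\<dots> = - f (?t ?K)"
      using dual_tm[OF f] by (simp add: mult_ac)
    also have "\<dots> = ?K (?t f)" using skew_swap[OF sk K f] by simp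
    finally show ?thesis .
  qed
  show ?thesis
    by (simp add: sum_list_addf t1 t2 t3)
qed

lemma dual_zero: "vector_space s \<Longrightarrow> dual_vec s (\<lambda>_. 0)"
  unfolding dual_vec_def Vector_Spaces.linear_def module_hom_def module_hom_axioms_def module_iff_vector_space
  by (auto simp: vector_space_def algebra_simps)

lemma lin_agree:
  assumes vs: "vector_space s" and sp: "module.span s \<beta> = UNIV"
    and L1: "dual_vec s L1" and L2: "dual_vec s L2" and eq: "\<forall>e\<in>\<beta>. L1 e = L2 e"
  shows "L1 v = L2 v"
proof -
  interpret vs: vector_space s by fact
  have "v \<in> vs.span \<beta>" using sp by simp
  then obtain t u where t: "finite t" "t \<subseteq> \<beta>" "v = (\<Sum>a\<in>t. s (u a) a)"
    unfolding vs.span_explicit by blast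
  have "L1 v = (\<Sum>a\<in>t. u a * L1 a)"
    using L1 t(3) unfolding dual_vec_def
    by (simp add: linear_iff_module_hom module_hom.sum module_hom.scale)
  also have "\<dots> = (\<Sum>a\<in>t. u a * L2 a)" using eq t(2) by (intro sum.cong refl) auto
  also have "\<dots> = L2 v"
    using L2 t(3) unfolding dual_vec_def
    by (simp add: linear_iff_module_hom module_hom.sum module_hom.scale)
  finally show ?thesis .
qed

lemma surj_form:
  assumes fd: "fin_dim_vs s" and bB: "bilinear_map s (*) B" and nd: "nondegenerate_form B"
    and f: "dual_vec s f"
  shows "\<exists>a. B a = f"
proof -
  from fd obtain S where vs: "vector_space s" and S: "finite S" "module.span s S = UNIV"
    unfolding fin_dim_vs_def by blast
  interpret vs: vector_space s by fact
  obtain \<beta> where \<beta>: "vs.independent \<beta>" "UNIV \<subseteq> vs.span \<beta>"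
    using vs.basis_exists[of UNIV] by blast
  have fin: "finite \<beta>" using vs.independent_span_bound[OF S(1) \<beta>(1)] S(2) by simp
  have spb: "vs.span \<beta> = UNIV" using \<beta>(2) by blast
  interpret fdv: finite_dimensional_vector_space s \<beta>
    by unfold_locales (use fin \<beta> spb in auto)
  have Bl: "Vector_Spaces.linear s (*) (\<lambda>x. B x y)" for y using bB unfolding bilinear_map_def by blast
  have Br: "dual_vec s (B x)" for x using bB unfolding bilinear_map_def dual_vec_def by blast
  define \<psi> where "\<psi> a = (\<Sum>e\<in>\<beta>. s (B a e) e)" for a
  have la: "\<psi> (a + b) = \<psi> a + \<psi> b" for a b
    unfolding \<psi>_def using lin_add[OF Bl] by (simp add: vs.scale_left_distrib sum.distrib)
  have ls: "\<psi> (s c a) = s c (\<psi> a)" for c a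
    unfolding \<psi>_def using lin_scale[OF Bl] by (simp add: vs.scale_sum_right)
  have lin: "Vector_Spaces.linear s s \<psi>"
    unfolding Vector_Spaces.linear_def module_hom_def module_hom_axioms_def module_iff_vector_space
    using vs la ls by (auto simp: module_iff_vector_space[symmetric])
  have diff: "\<psi> (a - b) = \<psi> a - \<psi> b" for a b using lin_diff[OF lin] .
  have inj: "inj \<psi>"
  proof (rule injI)
    fix a b assume "\<psi> a = \<psi> b"
    then have "(\<Sum>e\<in>\<beta>. s (B (a - b) e) e) = 0" using diff unfolding \<psi>_def by simp
    then have "\<forall>e\<in>\<beta>. B (a - b) e = 0"
      using vs.independentD[OF \<beta>(1) fin order_refl] by blast
    then have "B (a - b) y = 0" for y
      using lin_agree[OF vs spb Br[of "a - b"], of "\<lambda>_. 0" y] by (simp add: dual_zero[OF vs])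
    then have "a - b = 0" using nd unfolding nondegenerate_form_def by blast
    then show "a = b" by simp
  qed
  have "surj \<psi>" using fdv.linear_inj_imp_surj[OF lin inj] .
  then obtain a where a: "\<psi> a = (\<Sum>e\<in>\<beta>. s (f e) e)" by (metis surj_def)
  have "(\<Sum>e\<in>\<beta>. s (B a e - f e) e) = 0"
    using a unfolding \<psi>_def by (simp add: vs.scale_left_diff_distrib sum_subtractf)
  then have "\<forall>e\<in>\<beta>. B a e - f e = 0"
    using vs.independentD[OF \<beta>(1) fin order_refl, of "\<lambda>e. B a e - f e"] by blast
  then have "B a y = f y" for y using lin_agree[OF vs spb Br[of a] f] by simp
  then show ?thesis by blast
qed

lemma rb_test:
  assumes mal: "malcev_algebra s br" and sk: "skew_tensor s r"
    and bB: "bilinear_map s (*) B" and sy: "symmetric_form B" and iv: "invariant_form br B"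
  defines "R \<equiv> (\<lambda>x. tensor_map s r (\<lambda>y. B x y))"
  shows "B (br (R x) (R y) - R (br (R x) y + br x (R y))) c
     = B x (br (R y) (R c)) - B y (br (R x) (R c)) + B c (br (R x) (R y))"
proof -
  have Bl: "Vector_Spaces.linear s (*) (\<lambda>u. B u z)" for z using bB unfolding bilinear_map_def by blast
  have Br: "dual_vec s (B x)" for x using bB unfolding bilinear_map_def dual_vec_def by blast
  have as: "br u v = - br v u" for u v using mal unfolding malcev_algebra_def by blast
  have sy': "B u v = B v u" for u v using sy unfolding symmetric_form_def by blast
  have iv': "B (br u v) w = B u (br v w)" for u v w using iv unfolding invariant_form_def by blast
  have h1: "B (u - v) z = B u z - B v z" for u v z using lin_diff[OF Bl] .
  have h3: "B (R w) z = - B w (R z)" for w z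
  proof -
    have "B (R w) z = B z (R w)" by (rule sy')
    also have "\<dots> = - B w (R z)" unfolding R_def using skew_swap[OF sk Br[of w] Br[of z]] by simp
    finally show ?thesis .
  qed
  have h4: "B (u + v) z = B u z + B v z" for u v z using lin_add[OF Bl] .
  have h5: "B (br (R x) y) (R c) = - B y (br (R x) (R c))"
    using as[of "R x" y] lin_neg[OF Bl] iv' by metis
  have h6: "B (br x (R y)) (R c) = B x (br (R y) (R c))" by (rule iv')
  show ?thesis using h1 h3 h4 h5 h6 sy'[of "br (R x) (R y)" c] by simp
qed

theorem corollary2p7:
  fixes scale :: "'k::field_char_0 \<Rightarrow> 'v::ab_group_add \<Rightarrow> 'v"
    and br :: "'v \<Rightarrow> 'v \<Rightarrow> 'v"
    and r :: "('v \<times> 'v) list"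
    and B :: "'v \<Rightarrow> 'v \<Rightarrow> 'k"
  assumes "fin_dim_vs scale"
    and "malcev_algebra scale br"
    and "skew_tensor scale r"
    and "bilinear_map scale (*) B"
    and "symmetric_form B"
    and "invariant_form br B"
    and "nondegenerate_form B"
  shows "malcev_YBE scale br r \<longleftrightarrow> rota_baxter_0 br (\<lambda>x. tensor_map scale r (\<lambda>y. B x y))"
proof -
  define R where "R \<equiv> (\<lambda>x. tensor_map scale r (\<lambda>y. B x y))"
  let ?t = "tensor_map scale r"
  define T where "T f g h = f (br (?t g) (?t h)) - g (br (?t f) (?t h)) + h (br (?t f) (?t g))" for f g h
  have bl: "bilinear_map scale scale br" using assms(2) unfolding malcev_algebra_def by blast
  have Br: "dual_vec scale (B x)" for x using assms(4) unfolding bilinear_map_def dual_vec_def by blast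
  have Bl: "Vector_Spaces.linear scale (*) (\<lambda>u. B u z)" for z using assms(4) unfolding bilinear_map_def by blast
  have Rt: "R x = ?t (B x)" for x unfolding R_def by simp
  have Y: "malcev_YBE scale br r \<longleftrightarrow> (\<forall>f g h. dual_vec scale f \<longrightarrow> dual_vec scale g \<longrightarrow> dual_vec scale h \<longrightarrow> T f g h = 0)"
    unfolding malcev_YBE_def T_def using ybe_expr[OF bl assms(3)] by simp
  have test: "B (br (R x) (R y) - R (br (R x) y + br x (R y))) c = T (B x) (B y) (B c)" for x y c
    using rb_test[OF assms(2,3,4,5,6), of x y c] unfolding T_def R_def by simp
  have RB: "rota_baxter_0 br R \<longleftrightarrow> (\<forall>x y c. T (B x) (B y) (B c) = 0)"
  proof
    assume "rota_baxter_0 br R"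
    then show "\<forall>x y c. T (B x) (B y) (B c) = 0"
      using test lin_zero[OF Bl] unfolding rota_baxter_0_def by (metis diff_self)
  next
    assume a: "\<forall>x y c. T (B x) (B y) (B c) = 0"
    show "rota_baxter_0 br R" unfolding rota_baxter_0_def
    proof (intro allI)
      fix x y
      have "br (R x) (R y) - R (br (R x) y + br x (R y)) = 0"
        using assms(7) test a unfolding nondegenerate_form_def by metis
      then show "br (R x) (R y) = R (br (R x) y + br x (R y))" by simp
    qed
  qed
  have "(\<forall>f g h. dual_vec scale f \<longrightarrow> dual_vec scale g \<longrightarrow> dual_vec scale h \<longrightarrow> T f g h = 0)
      \<longleftrightarrow> (\<forall>x y c. T (B x) (B y) (B c) = 0)"
  proof
    assume "\<forall>f g h. dual_vec scale f \<longrightarrow> dual_vec scale g \<longrightarrow> dual_vec scale h \<longrightarrow> T f g h = 0"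
    then show "\<forall>x y c. T (B x) (B y) (B c) = 0" using Br by blast
  next
    assume a: "\<forall>x y c. T (B x) (B y) (B c) = 0"
    show "\<forall>f g h. dual_vec scale f \<longrightarrow> dual_vec scale g \<longrightarrow> dual_vec scale h \<longrightarrow> T f g h = 0"
    proof (intro allI impI)
      fix f g h assume "dual_vec scale f" "dual_vec scale g" "dual_vec scale h"
      then obtain x y c where "B x = f" "B y = g" "B c = h"
        using surj_form[OF assms(1,4,7)] by metis
      then show "T f g h = 0" using a by blast
    qed
  qed
  then show ?thesis using Y RB unfolding R_def by simp
qed

end
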